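(* $\rhd_{R_{\diamond}}\,=\,\rhd_{\diamond}$ with $R_{\diamond}\,=\,\Bigl\{ \frac{p\, , \, q}{p\diamond q}\,,\, \frac{p\diamond q}{p\, , \, q}\Bigr\}$.
   Context: $\rhd_\diamond$ is the multiple-conclusion (Scottian) logic of the two-valued Nmatrix $\langle\{0,1\},\cdot,\{1\}\rangle$ with one binary connective $\diamond$ (platypus) interpreted by $\diamond(0,0)=\{0\}$, $\diamond(1,1)=\{1\}$, $\diamond(0,1)=\diamond(1,0)=\{0,1\}$: $\Gamma\rhd_\diamond\Delta$ iff every valuation making all of $\Gamma$ equal to $1$ makes some member of $\Delta$ equal to $1$. For a set $R$ of multiple-conclusion rules $\frac{\Gamma}{\Delta}$ (premises read conjunctively, conclusions disjunctively), $\rhd_R$ is the closure of $R$ under overlap, dilution, cut and substitution invariance. *)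

theory Defs
  imports Main
begin

datatype fm = Var nat | Plat fm fm

primrec subst :: "(nat \<Rightarrow> fm) \<Rightarrow> fm \<Rightarrow> fm" where
  "subst \<sigma> (Var n) = \<sigma> n"
| "subst \<sigma> (Plat a b) = Plat (subst \<sigma> a) (subst \<sigma> b)"

text \<open>The two-valued Nmatrix: values bool (True = 1), designated value True,
non-deterministic interpretation of the platypus connective.\<close>
definition plat_interp :: "bool \<Rightarrow> bool \<Rightarrow> bool set" where
  "plat_interp x y = (if x = y then {x} else {False, True})"

definition nvaluation :: "(fm \<Rightarrow> bool) \<Rightarrow> bool" where
  "nvaluation v \<longleftrightarrow> (\<forall>a b. v (Plat a b) \<in> plat_interp (v a) (v b))"

definition plat_cons :: "fm set \<Rightarrow> fm set \<Rightarrow> bool" where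
  "plat_cons \<Gamma> \<Delta> \<longleftrightarrow>
     (\<forall>v. nvaluation v \<longrightarrow> (\<forall>\<gamma>\<in>\<Gamma>. v \<gamma>) \<longrightarrow> (\<exists>\<delta>\<in>\<Delta>. v \<delta>))"

inductive gen_cons :: "(fm set \<times> fm set) set \<Rightarrow> fm set \<Rightarrow> fm set \<Rightarrow> bool"
  for R where
  rule: "(\<Gamma>, \<Delta>) \<in> R \<Longrightarrow> gen_cons R \<Gamma> \<Delta>"
| overlap: "\<Gamma> \<inter> \<Delta> \<noteq> {} \<Longrightarrow> gen_cons R \<Gamma> \<Delta>"
| dilution: "gen_cons R \<Gamma> \<Delta> \<Longrightarrow> \<Gamma> \<subseteq> \<Gamma>' \<Longrightarrow> \<Delta> \<subseteq> \<Delta>' \<Longrightarrow> gen_cons R \<Gamma>' \<Delta>'"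
| cut: "gen_cons R \<Gamma> (insert \<phi> \<Delta>) \<Longrightarrow> gen_cons R (insert \<phi> \<Gamma>) \<Delta> \<Longrightarrow> gen_cons R \<Gamma> \<Delta>"
| substitution: "gen_cons R \<Gamma> \<Delta> \<Longrightarrow> gen_cons R (subst \<sigma> ` \<Gamma>) (subst \<sigma> ` \<Delta>)"

definition R_plat :: "(fm set \<times> fm set) set" where
  "R_plat = {({Var 0, Var 1}, {Plat (Var 0) (Var 1)}),
             ({Plat (Var 0) (Var 1)}, {Var 0, Var 1})}"

end

theory Submission
  imports Defs "HOL-Library.Countable"
begin

instance fm :: countable by countable_datatype

lemma sound: "gen_cons R_plat G D \<Longrightarrow> plat_cons G D"
proof (induction rule: gen_cons.induct)
  case (rule G D)
  have a: "v (Plat x y)" if "nvaluation v" "v x" "v y" for v x y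
    using that unfolding nvaluation_def plat_interp_def by (metis singletonD)
  have b: "v x \<or> v y" if "nvaluation v" "v (Plat x y)" for v x y
    using that unfolding nvaluation_def plat_interp_def by (metis singletonD)
  from rule show ?case
    unfolding R_plat_def plat_cons_def
    using a b by fastforce
next
  case (overlap G D) then show ?case unfolding plat_cons_def by blast
next
  case (dilution G D G' D') then show ?case unfolding plat_cons_def by blast
next
  case (cut G p D) then show ?case unfolding plat_cons_def by blast
next
  case (substitution G D s)
  show ?case unfolding plat_cons_def
  proof (intro allI impI)
    fix v assume v: "nvaluation v" and g: "\<forall>x\<in>subst s ` G. v x"
    have "nvaluation (v \<circ> subst s)" using v unfolding nvaluation_def by simp
    moreover have "\<forall>x\<in>G. (v \<circ> subst s) x" using g by simp
    ultimately have "\<exists>x\<in>D. (v \<circ> subst s) x" using substitution.IH unfolding plat_cons_def by blast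
    then show "\<exists>x\<in>subst s ` D. v x" by auto
  qed
qed

lemma finitary: "gen_cons R_plat G D \<Longrightarrow>
  \<exists>G0 D0. finite G0 \<and> finite D0 \<and> G0 \<subseteq> G \<and> D0 \<subseteq> D \<and> gen_cons R_plat G0 D0"
proof (induction rule: gen_cons.induct)
  case (rule G D)
  then have "finite G" "finite D" unfolding R_plat_def by auto
  moreover have "gen_cons R_plat G D" using rule by (rule gen_cons.rule)
  ultimately show ?case by (intro exI[of _ G] exI[of _ D]) simp
next
  case (overlap G D)
  then obtain x where x: "x \<in> G" "x \<in> D" by blast
  have "gen_cons R_plat {x} {x}" by (rule gen_cons.overlap) simp
  then show ?case using x
    by (intro exI[of _ "{x}"]) simp
next
  case (dilution G D G' D')
  then obtain G0 D0 where "finite G0" "finite D0" "G0 \<subseteq> G" "D0 \<subseteq> D" "gen_cons R_plat G0 D0" by blast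
  then show ?case using dilution.hyps(2,3)
    by (intro exI[of _ G0] exI[of _ D0]) (simp add: subset_trans[of G0 G G'] subset_trans[of D0 D D'])
next
  case (cut G p D)
  from cut.IH(1) obtain G0 D0 where a: "finite G0" "finite D0" "G0 \<subseteq> G" "D0 \<subseteq> insert p D" "gen_cons R_plat G0 D0" by blast
  from cut.IH(2) obtain G1 D1 where b: "finite G1" "finite D1" "G1 \<subseteq> insert p G" "D1 \<subseteq> D" "gen_cons R_plat G1 D1" by blast
  let ?G = "G0 \<union> (G1 - {p})" and ?D = "(D0 - {p}) \<union> D1"
  have "gen_cons R_plat ?G (insert p ?D)"
    by (rule gen_cons.dilution[OF a(5)]) blast+
  moreover have "gen_cons R_plat (insert p ?G) ?D"
    by (rule gen_cons.dilution[OF b(5)]) blast+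
  ultimately have "gen_cons R_plat ?G ?D" by (rule gen_cons.cut)
  moreover have "finite ?G" "finite ?D" using a b by simp_all
  moreover have "?G \<subseteq> G" "?D \<subseteq> D" using a b by blast+
  ultimately show ?case by (intro exI[of _ ?G] exI[of _ ?D]) simp
next
  case (substitution G D s)
  then obtain G0 D0 where h: "finite G0" "finite D0" "G0 \<subseteq> G" "D0 \<subseteq> D" "gen_cons R_plat G0 D0" by blast
  have "gen_cons R_plat (subst s ` G0) (subst s ` D0)" using h(5) by (rule gen_cons.substitution)
  moreover have "subst s ` G0 \<subseteq> subst s ` G" "subst s ` D0 \<subseteq> subst s ` D" using h by (simp_all add: image_mono)
  ultimately show ?case using h(1,2) by blast
qed

primrec lext :: "fm set \<Rightarrow> fm set \<Rightarrow> nat \<Rightarrow> fm set \<times> fm set" where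
  "lext G D 0 = (G, D)"
| "lext G D (Suc n) = (let p = from_nat n; T = fst (lext G D n); F = snd (lext G D n) in
     if gen_cons R_plat (insert p T) F then (T, insert p F) else (insert p T, F))"

lemma lext_ok: "\<not> gen_cons R_plat G D \<Longrightarrow> \<not> gen_cons R_plat (fst (lext G D n)) (snd (lext G D n))"
  by (induction n) (auto simp: Let_def dest: gen_cons.cut)

lemma lext_mono: "m \<le> n \<Longrightarrow> fst (lext G D m) \<subseteq> fst (lext G D n) \<and> snd (lext G D m) \<subseteq> snd (lext G D n)"
proof (induction n)
  case 0 then show ?case by simp
next
  case (Suc n)
  have "fst (lext G D n) \<subseteq> fst (lext G D (Suc n)) \<and> snd (lext G D n) \<subseteq> snd (lext G D (Suc n))"
    by (auto simp: Let_def)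
  then show ?case using Suc by (cases "m = Suc n") auto
qed

lemma finite_in_stage:
  assumes "finite A" "A \<subseteq> (\<Union>n. f n)" "\<And>m n::nat. m \<le> n \<Longrightarrow> f m \<subseteq> (f n :: 'a set)"
  shows "\<exists>n. A \<subseteq> f n"
  using assms(1,2)
proof (induction A rule: finite_induct)
  case empty then show ?case by simp
next
  case (insert x A)
  then obtain n where n: "A \<subseteq> f n" by auto
  from insert obtain k where k: "x \<in> f k" by auto
  have "f n \<subseteq> f (max n k)" by (rule assms(3)) (rule max.cobounded1)
  then have "A \<subseteq> f (max n k)" using n by (rule subset_trans[rotated])
  moreover have "f k \<subseteq> f (max n k)" by (rule assms(3)) (rule max.cobounded2)
  then have "x \<in> f (max n k)" using k by blast
  ultimately show ?case by blast
qed

lemma complete: assumes "plat_cons G D" shows "gen_cons R_plat G D"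
proof (rule ccontr)
  assume ng: "\<not> gen_cons R_plat G D"
  define T where "T = (\<Union>n. fst (lext G D n))"
  define F where "F = (\<Union>n. snd (lext G D n))"
  have GT: "G \<subseteq> T" unfolding T_def by (auto intro!: exI[of _ 0])
  have DF: "D \<subseteq> F" unfolding F_def by (auto intro!: exI[of _ 0])
  have nTF: "\<not> gen_cons R_plat T F"
  proof
    assume "gen_cons R_plat T F"
    then obtain T0 F0 where h: "finite T0" "finite F0" "T0 \<subseteq> T" "F0 \<subseteq> F" "gen_cons R_plat T0 F0"
      using finitary[of T F] by blast
    obtain n1 where n1: "T0 \<subseteq> fst (lext G D n1)"
      using finite_in_stage[of T0 "\<lambda>n. fst (lext G D n)", OF h(1) h(3)[unfolded T_def]] lext_mono by blast
    obtain n2 where n2: "F0 \<subseteq> snd (lext G D n2)"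
      using finite_in_stage[of F0 "\<lambda>n. snd (lext G D n)", OF h(2) h(4)[unfolded F_def]] lext_mono by blast
    have "T0 \<subseteq> fst (lext G D (max n1 n2))" "F0 \<subseteq> snd (lext G D (max n1 n2))"
      using n1 n2 lext_mono[of n1 "max n1 n2" G D] lext_mono[of n2 "max n1 n2" G D] by auto
    then have "gen_cons R_plat (fst (lext G D (max n1 n2))) (snd (lext G D (max n1 n2)))"
      by (rule gen_cons.dilution[OF h(5)])
    then show False using lext_ok[OF ng] by simp
  qed
  have all: "p \<in> T \<or> p \<in> F" for p
  proof -
    have "p \<in> fst (lext G D (Suc (to_nat p))) \<or> p \<in> snd (lext G D (Suc (to_nat p)))"
      by (auto simp: Let_def)
    then show ?thesis unfolding T_def F_def by blast
  qed
  have disj: "p \<in> T \<Longrightarrow> p \<in> F \<Longrightarrow> False" for p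
    using nTF gen_cons.overlap[of T F R_plat] by auto
  have inst: "gen_cons R_plat {a, b} {Plat a b}" "gen_cons R_plat {Plat a b} {a, b}" for a b
  proof -
    define s where "s = (\<lambda>n::nat. if n = 0 then a else b)"
    have r1: "gen_cons R_plat {Var 0, Var 1} {Plat (Var 0) (Var 1)}"
      and r2: "gen_cons R_plat {Plat (Var 0) (Var 1)} {Var 0, Var 1}"
      by (auto intro: gen_cons.rule simp: R_plat_def)
    show "gen_cons R_plat {a, b} {Plat a b}"
      using gen_cons.substitution[OF r1, of s] by (simp add: s_def)
    show "gen_cons R_plat {Plat a b} {a, b}"
      using gen_cons.substitution[OF r2, of s] by (simp add: s_def)
  qed
  define v where "v = (\<lambda>p. p \<in> T)"
  have nv: "nvaluation v"
    unfolding nvaluation_def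
  proof (intro allI)
    fix a b
    show "v (Plat a b) \<in> plat_interp (v a) (v b)"
    proof (cases "v a = v b")
      case False then show ?thesis by (auto simp: plat_interp_def)
    next
      case True
      show ?thesis
      proof (cases "v a")
        case True
        with \<open>v a = v b\<close> have "a \<in> T" "b \<in> T" by (auto simp: v_def)
        have "Plat a b \<in> T"
        proof (rule ccontr)
          assume "Plat a b \<notin> T"
          then have "Plat a b \<in> F" using all by blast
          then have "gen_cons R_plat T F"
            using \<open>a \<in> T\<close> \<open>b \<in> T\<close> by (intro gen_cons.dilution[OF inst(1)[of a b]]) simp_all
          then show False using nTF by blast
        qed
        then show ?thesis using True \<open>v a = v b\<close> by (auto simp: v_def plat_interp_def)
      next
        case False
        with \<open>v a = v b\<close> have "a \<in> F" "b \<in> F" using all by (auto simp: v_def)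
        have "Plat a b \<notin> T"
        proof
          assume "Plat a b \<in> T"
          then have "gen_cons R_plat T F"
            using \<open>a \<in> F\<close> \<open>b \<in> F\<close> by (intro gen_cons.dilution[OF inst(2)[of a b]]) simp_all
          then show False using nTF by blast
        qed
        then show ?thesis using False \<open>v a = v b\<close> by (auto simp: v_def plat_interp_def)
      qed
    qed
  qed
  have "\<forall>g\<in>G. v g" using GT by (auto simp: v_def)
  then obtain d where "d \<in> D" "v d" using assms nv unfolding plat_cons_def by blast
  then show False using DF disj by (auto simp: v_def)
qed

theorem theorem3:
  shows "gen_cons R_plat = plat_cons"
  using sound complete by (intro ext iffI) auto

end
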